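(* Let $x\in\mathbb{R}^{w\times h}$ be a sample with true label $y_0$, let $\mathbb{P}$ be a set of patch regions, let $\mathbb{M}_{\mathbb{P}}$ be a covering mask set for $\mathbb{P}$, and let $\tau\in[0,1]$. Suppose $$\max\{f_{\mathrm{conf}}(x_{\mathrm{M}}) : \mathrm{M}\in\mathbb{M}_{\mathbb{P}},\ f(x_{\mathrm{M}})\neq y_0\}<\tau .$$ Then for every $x'\in\mathbb{A}_{\mathbb{P}}(x)$ with $f(x')\neq y_0$, at least one of the following holds: (i) $\{x'_{\mathrm{M}} : \mathrm{M}\in\mathbb{M}_{\mathbb{P}},\ f(x'_{\mathrm{M}})\neq f(x')\}\neq\emptyset$; (ii) $\min\{f_{\mathrm{conf}}(x'_{\mathrm{M}}) : \mathrm{M}\in\mathbb{M}_{\mathbb{P}},\ f(x'_{\mathrm{M}})= f(x')\}<\tau$. Equivalently, in terms of the HiCert functions $v,w$ defined in the context: $v(x)$ implies that $w(x')$ holds for every $x'\in\mathbb{A}_{\mathbb{P}}(x)$ with $f(x')\neq y_0$.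
   Context: Samples are real matrices in $\mathbb{R}^{w\times h}$; $J$ is the all-ones matrix, and $+,-,\odot$ are entrywise. A classifier is a function $f:\mathbb{R}^{w\times h}\to\mathcal{Y}$ ($\mathcal{Y}$ a finite label set) together with a confidence function $f_{\mathrm{conf}}:\mathbb{R}^{w\times h}\to(0,1)$. A patch region is $\mathrm{P}\in\{0,1\}^{w\times h}$; $\mathbb{P}$ is a set of patch regions. The attack constraint set of $x$ is $\mathbb{A}_{\mathbb{P}}(x)=\{x'' : \exists\,\mathrm{P}\in\mathbb{P},\ x''=(J-\mathrm{P})\odot x+\mathrm{P}\odot x''\}$. A mask is $\mathrm{M}\in\{0,1\}^{w\times h}$, and the mutant of $\hat x$ for $\mathrm{M}$ is $\hat x_{\mathrm{M}}=(J-\mathrm{M})\odot\hat x$. A covering mask set for $\mathbb{P}$ is a finite set of masks $\mathbb{M}_{\mathbb{P}}$ such that for every $\mathrm{P}\in\mathbb{P}$ there is $\mathrm{M}\in\mathbb{M}_{\mathbb{P}}$ with $\mathrm{P}\odot\mathrm{M}=\mathrm{P}$. Conventions: $\max\emptyset=-\infty$, $\min\emptyset=+\infty$. HiCert's certification function is $v(x):=[\max\{f_{\mathrm{conf}}(x_{\mathrm{M}}):\mathrm{M}\in\mathbb{M}_{\mathbb{P}}, f(x_{\mathrm{M}})\neq y_0\}<\tau]$ (with $y_0$ the true label of $x$), and its warning function is $w(\hat x):=[\{\hat x_{\mathrm{M}}:\mathrm{M}\in\mathbb{M}_{\mathbb{P}}, f(\hat x_{\mathrm{M}})\neq f(\hat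 x)\}\neq\emptyset]\lor[\min\{f_{\mathrm{conf}}(\hat x_{\mathrm{M}}):\mathrm{M}\in\mathbb{M}_{\mathbb{P}}, f(\hat x_{\mathrm{M}})=f(\hat x)\}<\tau]$. *)

theory Defs
  imports "HOL-Analysis.Analysis"
begin

text \<open>Samples: real w x h matrices, rendered as real ^ 'h ^ 'w with finite index types.
  Masks and patch regions are real matrices with entries in {0,1}.\<close>

type_synonym ('w,'h) sample = "real ^ 'h ^ 'w"

definition ones :: "('w::finite,'h::finite) sample" ("J") where
  "ones = (\<chi> i j. 1)"

definition hadamard :: "('w::finite,'h::finite) sample \<Rightarrow> ('w,'h) sample \<Rightarrow> ('w,'h) sample"
  (infixl "\<odot>" 70) where
  "A \<odot> B = (\<chi> i j. (A $ i $ j) * (B $ i $ j))"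

definition binary :: "('w::finite,'h::finite) sample \<Rightarrow> bool" where
  "binary P \<longleftrightarrow> (\<forall>i j. P $ i $ j = 0 \<or> P $ i $ j = 1)"

definition attack_set :: "('w::finite,'h::finite) sample set \<Rightarrow> ('w,'h) sample \<Rightarrow> ('w,'h) sample set" where
  "attack_set PP x = {x''. \<exists>P\<in>PP. x'' = (J - P) \<odot> x + P \<odot> x''}"

definition mutant :: "('w::finite,'h::finite) sample \<Rightarrow> ('w,'h) sample \<Rightarrow> ('w,'h) sample" where
  "mutant x M = (J - M) \<odot> x"

definition covering_mask_set :: "('w::finite,'h::finite) sample set \<Rightarrow> ('w,'h) sample set \<Rightarrow> bool" where
  "covering_mask_set PP MM \<longleftrightarrow> finite MM \<and> (\<forall>M\<in>MM. binary M) \<and>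
     (\<forall>P\<in>PP. \<exists>M\<in>MM. P \<odot> M = P)"

text \<open>max / min of a set of reals with conventions max {} = -\<infinity>, min {} = +\<infinity>.\<close>
definition emax :: "real set \<Rightarrow> ereal" where "emax S = Sup (ereal ` S)"
definition emin :: "real set \<Rightarrow> ereal" where "emin S = Inf (ereal ` S)"

end

theory Submission
  imports Defs
begin

lemma mutant_eq:
  fixes x x' P M :: "('w::finite,'h::finite) sample"
  assumes "x' = (J - P) \<odot> x + P \<odot> x'" "P \<odot> M = P" "binary M"
  shows "mutant x' M = mutant x M"
proof -
  have "\<And>i j. (1 - M $ i $ j) * x' $ i $ j = (1 - M $ i $ j) * x $ i $ j"
  proof -
    fix i j
    have e1: "x' $ i $ j = (1 - P $ i $ j) * x $ i $ j + P $ i $ j * x' $ i $ j"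
      using arg_cong[OF assms(1), of "\<lambda>z. z $ i $ j"] by (simp add: hadamard_def ones_def)
    have e2: "P $ i $ j * M $ i $ j = P $ i $ j"
      using arg_cong[OF assms(2), of "\<lambda>z. z $ i $ j"] by (simp add: hadamard_def)
    have "M $ i $ j = 0 \<or> M $ i $ j = 1" using assms(3) by (simp add: binary_def)
    then show "(1 - M $ i $ j) * x' $ i $ j = (1 - M $ i $ j) * x $ i $ j"
    proof
      assume "M $ i $ j = 0"
      then have "P $ i $ j = 0" using e2 by simp
      then show ?thesis using e1 \<open>M $ i $ j = 0\<close> by simp
    qed simp
  qed
  then show ?thesis by (simp add: mutant_def hadamard_def ones_def vec_eq_iff)
qed

theorem theorem2:
  fixes f :: "('w::finite,'h::finite) sample \<Rightarrow> 'y::finite"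
    and fconf :: "('w,'h) sample \<Rightarrow> real"
    and x :: "('w,'h) sample" and y0 :: 'y
    and PP MM :: "('w,'h) sample set" and \<tau> :: real
  assumes conf_range: "\<forall>z. 0 < fconf z \<and> fconf z < 1"
    and PP_binary: "\<forall>P\<in>PP. binary P"
    and cover: "covering_mask_set PP MM"
    and tau: "0 \<le> \<tau>" "\<tau> \<le> 1"
    and cert: "emax {fconf (mutant x M) | M. M \<in> MM \<and> f (mutant x M) \<noteq> y0} < ereal \<tau>"
  shows "\<forall>x'\<in>attack_set PP x. f x' \<noteq> y0 \<longrightarrow>
           ({mutant x' M | M. M \<in> MM \<and> f (mutant x' M) \<noteq> f x'} \<noteq> {} \<or>
            emin {fconf (mutant x' M) | M. M \<in> MM \<and> f (mutant x' M) = f x'} < ereal \<tau>)"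
proof (intro ballI impI)
  fix x' assume xa: "x' \<in> attack_set PP x" and fx: "f x' \<noteq> y0"
  then obtain P where P: "P \<in> PP" "x' = (J - P) \<odot> x + P \<odot> x'"
    by (auto simp: attack_set_def)
  then obtain M where M: "M \<in> MM" "P \<odot> M = P" "binary M"
    using cover by (auto simp: covering_mask_set_def)
  have eq: "mutant x' M = mutant x M" using mutant_eq[OF P(2) M(2,3)] .
  show "{mutant x' M | M. M \<in> MM \<and> f (mutant x' M) \<noteq> f x'} \<noteq> {} \<or>
            emin {fconf (mutant x' M) | M. M \<in> MM \<and> f (mutant x' M) = f x'} < ereal \<tau>"
  proof (cases "f (mutant x' M) = f x'")
    case False then show ?thesis using M(1) by blast
  next
    case True
    have "fconf (mutant x M) \<in> {fconf (mutant x M) | M. M \<in> MM \<and> f (mutant x M) \<noteq> y0}"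
      using M(1) True eq fx by auto
    then have "ereal (fconf (mutant x M)) \<le> emax {fconf (mutant x M) | M. M \<in> MM \<and> f (mutant x M) \<noteq> y0}"
      unfolding emax_def by (intro Sup_upper) auto
    then have "ereal (fconf (mutant x M)) < ereal \<tau>" by (rule order.strict_trans1[OF _ cert])
    then have lt: "ereal (fconf (mutant x' M)) < ereal \<tau>" using eq by simp
    have "fconf (mutant x' M) \<in> {fconf (mutant x' M) | M. M \<in> MM \<and> f (mutant x' M) = f x'}"
      using M(1) True by auto
    then have "emin {fconf (mutant x' M) | M. M \<in> MM \<and> f (mutant x' M) = f x'} \<le> ereal (fconf (mutant x' M))"
      unfolding emin_def by (intro Inf_lower) auto
    then have "emin {fconf (mutant x' M) | M. M \<in> MM \<and> f (mutant x' M) = f x'} < ereal \<tau>"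
      by (rule order.strict_trans1[OF _ lt])
    then show ?thesis by (rule disjI2)
  qed
qed

end
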